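(* Let $(X,d)$ be a $\delta$-hyperbolic geodesic metric space, $\delta\ge0$. Then for all $x,y\in X$ and $s,t\ge0$, the set $B(x,s)\cap B(y,t)$ has eccentricity at most $2\delta$; and if it is nonempty, there are $c\in X$, $r\ge 0$ with $d_H(B(x,s)\cap B(y,t),B(c,r))\le 2\delta$.
   Context: $B(x,r)=\{z\in X: d(x,z)\le r\}$ denotes the closed ball. A set $S\subseteq X$ has eccentricity at most $\delta$ if $S=\emptyset$ or there exist $R\ge 0$ and $c,c'\in X$ with $B(c,R)\subseteq S\subseteq B(c',R+\delta)$. $d_H$ is Hausdorff distance. A geodesic metric space is $\delta$-hyperbolic if for every geodesic triangle each side is contained in the $\delta$-neighbourhood of the union of the other two sides. *)

theory Defs
  imports "HOL-Analysis.Analysis"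
begin

definition geodesic_segment_between :: "'a::metric_space set \<Rightarrow> 'a \<Rightarrow> 'a \<Rightarrow> bool" where
  "geodesic_segment_between G x y \<longleftrightarrow>
     (\<exists>g :: real \<Rightarrow> 'a. g 0 = x \<and> g (dist x y) = y \<and>
        (\<forall>s\<in>{0..dist x y}. \<forall>t\<in>{0..dist x y}. dist (g s) (g t) = \<bar>s - t\<bar>) \<and>
        G = g ` {0..dist x y})"

definition geodesic_space :: "'a::metric_space itself \<Rightarrow> bool" where
  "geodesic_space _ \<longleftrightarrow> (\<forall>x y::'a. \<exists>G. geodesic_segment_between G x y)"

definition delta_hyperbolic :: "'a::metric_space itself \<Rightarrow> real \<Rightarrow> bool" where
  "delta_hyperbolic _ \<delta> \<longleftrightarrow>
     (\<forall>(x::'a) y z Gxy Gyz Gxz.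
        geodesic_segment_between Gxy x y \<and> geodesic_segment_between Gyz y z \<and>
        geodesic_segment_between Gxz x z \<longrightarrow>
        (\<forall>p\<in>Gxy. \<exists>q\<in>Gyz \<union> Gxz. dist p q \<le> \<delta>) \<and>
        (\<forall>p\<in>Gyz. \<exists>q\<in>Gxy \<union> Gxz. dist p q \<le> \<delta>) \<and>
        (\<forall>p\<in>Gxz. \<exists>q\<in>Gxy \<union> Gyz. dist p q \<le> \<delta>))"

definition eccentricity_le :: "'a::metric_space set \<Rightarrow> real \<Rightarrow> bool" where
  "eccentricity_le S \<delta> \<longleftrightarrow>
     S = {} \<or> (\<exists>R c c'. R \<ge> 0 \<and> cball c R \<subseteq> S \<and> S \<subseteq> cball c' (R + \<delta>))"

text \<open>Hausdorff distance (used for nonempty bounded sets).\<close>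
definition hausdorff_dist :: "'a::metric_space set \<Rightarrow> 'a set \<Rightarrow> real" where
  "hausdorff_dist A B = max (SUP a\<in>A. infdist a B) (SUP b\<in>B. infdist b A)"

end

theory Submission
  imports Defs
begin

lemma geo_split:
  assumes "geodesic_segment_between G x y" "q \<in> G"
  shows "dist x q + dist q y = dist x y"
proof -
  obtain g where g: "g 0 = x" "g (dist x y) = y"
    "\<forall>s\<in>{0..dist x y}. \<forall>t\<in>{0..dist x y}. dist (g s) (g t) = \<bar>s - t\<bar>"
    "G = g ` {0..dist x y}"
    using assms(1) unfolding geodesic_segment_between_def by blast
  then obtain u where u: "u \<in> {0..dist x y}" "q = g u" using assms(2) by blast
  have "dist x q = u" using g(1) g(3)[rule_format, of 0 u] u by auto
  moreover have "dist q y = dist x y - u" using g(2) g(3)[rule_format, of u "dist x y"] u by auto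
  ultimately show ?thesis by simp
qed

lemma geo_point:
  assumes "geodesic_segment_between G x y" "0 \<le> a" "a \<le> dist x y"
  shows "\<exists>p\<in>G. dist x p = a \<and> dist p y = dist x y - a"
proof -
  obtain g where g: "g 0 = x" "g (dist x y) = y"
    "\<forall>s\<in>{0..dist x y}. \<forall>t\<in>{0..dist x y}. dist (g s) (g t) = \<bar>s - t\<bar>"
    "G = g ` {0..dist x y}"
    using assms(1) unfolding geodesic_segment_between_def by blast
  have "dist x (g a) = a" using g(1) g(3)[rule_format, of 0 a] assms by auto
  moreover have "dist (g a) y = dist x y - a" using g(2) g(3)[rule_format, of a "dist x y"] assms by auto
  moreover have "g a \<in> G" using g(4) assms by auto
  ultimately show ?thesis by blast
qed

lemma key:
  fixes S :: "'a::metric_space set"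
  assumes geo: "geodesic_space TYPE('a)" and d: "\<delta> \<ge> 0"
    and R: "R \<ge> 0" and sub1: "cball c R \<subseteq> S" and sub2: "S \<subseteq> cball c (R + 2*\<delta>)"
  shows "eccentricity_le S (2*\<delta>) \<and> (\<exists>c r. r \<ge> 0 \<and> hausdorff_dist S (cball c r) \<le> 2 * \<delta>)"
proof
  show "eccentricity_le S (2*\<delta>)" unfolding eccentricity_le_def using R sub1 sub2 by blast
  have A: "infdist z (cball c R) \<le> 2*\<delta>" if "z \<in> S" for z
  proof (cases "dist c z \<le> R")
    case True
    then show ?thesis using d by (simp add: infdist_zero mem_cball)
  next
    case False
    obtain G where G: "geodesic_segment_between G c z" using geo unfolding geodesic_space_def by blast
    obtain p where p: "dist c p = R" "dist p z = dist c z - R"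
      using geo_point[OF G R] False by auto
    have "p \<in> cball c R" using p by simp
    hence "infdist z (cball c R) \<le> dist z p" by (rule infdist_le)
    also have "\<dots> \<le> 2*\<delta>" using p sub2 that by (auto simp: dist_commute mem_cball)
    finally show ?thesis .
  qed
  have B: "infdist b S = 0" if "b \<in> cball c R" for b using sub1 that by (auto intro: infdist_zero)
  have ne: "S \<noteq> {}" using sub1 R by (metis centre_in_cball empty_iff subsetD)
  have s1: "(SUP a\<in>S. infdist a (cball c R)) \<le> 2*\<delta>"
    by (rule cSUP_least[OF ne A])
  have ne2: "cball c R \<noteq> {}" using R by auto
  have s2: "(SUP b\<in>cball c R. infdist b S) \<le> 2*\<delta>"
    using cSUP_least[OF ne2, of "\<lambda>b. infdist b S" "2*\<delta>"] B d by simp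
  show "\<exists>c r. r \<ge> 0 \<and> hausdorff_dist S (cball c r) \<le> 2 * \<delta>"
    using s1 s2 R unfolding hausdorff_dist_def by auto
qed

theorem proposition3p2:
  fixes \<delta> :: real
  assumes "geodesic_space TYPE('a::metric_space)"
    and "delta_hyperbolic TYPE('a) \<delta>"
    and "\<delta> \<ge> 0"
  shows "\<forall>(x::'a) y s t. s \<ge> 0 \<and> t \<ge> 0 \<longrightarrow>
           eccentricity_le (cball x s \<inter> cball y t) (2 * \<delta>) \<and>
           (cball x s \<inter> cball y t \<noteq> {} \<longrightarrow>
              (\<exists>c r. r \<ge> 0 \<and> hausdorff_dist (cball x s \<inter> cball y t) (cball c r) \<le> 2 * \<delta>))"
proof (intro allI impI)
  fix x y :: 'a and s t :: real
  assume st: "s \<ge> 0 \<and> t \<ge> 0"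
  define S where "S = cball x s \<inter> cball y t"
  show "eccentricity_le S (2 * \<delta>) \<and>
           (S \<noteq> {} \<longrightarrow> (\<exists>c r. r \<ge> 0 \<and> hausdorff_dist S (cball c r) \<le> 2 * \<delta>))"
  proof (cases "S = {}")
    case True
    then show ?thesis unfolding eccentricity_le_def by simp
  next
    case False
    have "\<exists>c R. R \<ge> 0 \<and> cball c R \<subseteq> S \<and> S \<subseteq> cball c (R + 2*\<delta>)"
    proof -
      define D where "D = dist x y"
      obtain z0 where "z0 \<in> S" using False by blast
      hence Dle: "D \<le> s + t" unfolding S_def D_def using dist_triangle[of x y z0]
        by (auto simp: dist_commute mem_cball)
      show ?thesis
      proof (cases "s \<ge> D + t")
        case True
        have "S = cball y t"
        proof -
          have "w \<in> cball x s" if "w \<in> cball y t" for w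
            using that True dist_triangle[of x w y] unfolding D_def by (simp add: dist_commute)
          thus ?thesis unfolding S_def by blast
        qed
        moreover have "cball y t \<subseteq> cball y (t + 2*\<delta>)" using assms(3) by (auto simp: mem_cball)
          ultimately show ?thesis using st by blast
      next
        case nT: False
        show ?thesis
        proof (cases "t \<ge> D + s")
          case True
          have "S = cball x s"
          proof -
            have "w \<in> cball y t" if "w \<in> cball x s" for w
              using that True dist_triangle[of y w x] unfolding D_def by (simp add: dist_commute)
            thus ?thesis unfolding S_def by blast
          qed
          moreover have "cball x s \<subseteq> cball x (s + 2*\<delta>)" using assms(3) by (auto simp: mem_cball)
          ultimately show ?thesis using st by blast
        next
          case nT2: False
          define R where "R = (s + t - D) / 2"
          define a where "a = s - R"
          obtain G where G: "geodesic_segment_between G x y" using assms(1) unfolding geodesic_space_def by blast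
          have a_bounds: "0 \<le> a" "a \<le> D" using nT nT2 unfolding a_def R_def by (auto simp: field_simps)
          obtain c where cG: "c \<in> G" and c: "dist x c = a" "dist c y = D - a"
            using geo_point[OF G, of a] a_bounds unfolding D_def by blast
          have R0: "R \<ge> 0" using Dle R_def by simp
          have "cball c R \<subseteq> S"
          proof
            fix w assume "w \<in> cball c R"
            hence w: "dist c w \<le> R" by simp
            have "dist x w \<le> s" using dist_triangle[of x w c] c w unfolding a_def by linarith
            moreover have "dist y w \<le> t" using dist_triangle[of y w c] c w unfolding a_def R_def
              by (simp add: dist_commute field_simps)
            ultimately show "w \<in> S" unfolding S_def by simp
          qed
          moreover have "S \<subseteq> cball c (R + 2*\<delta>)"
          proof
            fix z assume zS: "z \<in> S"
            hence zx: "dist x z \<le> s" and zy: "dist y z \<le> t" unfolding S_def by auto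
            obtain Gxz where Gxz: "geodesic_segment_between Gxz x z" using assms(1) unfolding geodesic_space_def by blast
            obtain Gyz where Gyz: "geodesic_segment_between Gyz y z" using assms(1) unfolding geodesic_space_def by blast
            obtain q where q: "q \<in> Gyz \<union> Gxz" "dist c q \<le> \<delta>"
              using assms(2) cG Gxz Gyz G unfolding delta_hyperbolic_def by blast
            show "z \<in> cball c (R + 2*\<delta>)"
            proof (cases "q \<in> Gxz")
              case True
              have e: "dist x q + dist q z = dist x z" by (rule geo_split[OF Gxz True])
              have "dist x c \<le> dist x q + dist q c" by (rule dist_triangle)
              moreover have "dist c z \<le> dist c q + dist q z" by (rule dist_triangle)
              ultimately show ?thesis using e c zx q(2) unfolding a_def by (simp add: dist_commute)
            next
              case False
              hence qy: "q \<in> Gyz" using q(1) by blast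
              have e: "dist y q + dist q z = dist y z" by (rule geo_split[OF Gyz qy])
              have "dist y c \<le> dist y q + dist q c" by (rule dist_triangle)
              moreover have "dist c z \<le> dist c q + dist q z" by (rule dist_triangle)
              ultimately show ?thesis using e c zy q(2) unfolding a_def R_def by (simp add: dist_commute field_simps)
            qed
          qed
          ultimately show ?thesis using R0 by blast
        qed
      qed
    qed
    then obtain c R where "R \<ge> 0" "cball c R \<subseteq> S" "S \<subseteq> cball c (R + 2*\<delta>)" by blast
    from key[OF assms(1) assms(3) this] show ?thesis by blast
  qed
qed

end
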